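(* Let $R=\mathrm{Mat}_n(\mathcal O_D,\underline m)\subset\mathrm{Mat}_n(D)$ be a standard monomial order of level $\underline m=(m_{ij})$ with $m_{1i}=0$ for all $i=1,\dots,n$. Let $l_1,\dots,l_n\in\mathbb Z$ and let $M=[\mathfrak P^{l_1},\dots,\mathfrak P^{l_n}]^t=\{[x_1,\dots,x_n]^t: x_i\in\mathfrak P^{l_i}\}\subset D^n$ be a left $R$-submodule of $D^n$ (where $R$ acts on column vectors by matrix multiplication). Then $M$ is a projective left $R$-module if and only if $M$ is, up to a scalar in $D$, a column of $R$; that is, if and only if there exist $1\le j\le n$ and $c\in\mathbb Z$ such that $l_i=m_{ij}+c$ for all $1\le i\le n$.
   Context: Let $k$ be a non-Archimedean local field with ring of integers $\mathcal O$, let $D$ be a finite-dimensional central division algebra over $k$, $\mathcal O_D$ its valuation ring, $\mathfrak P$ its maximal ideal. For $\underline m=(m_{ij})\in\mathrm{Mat}_n(\mathbb Z)$ with $m_{ii}=0$ and $m_{ik}\le m_{ij}+m_{jk}$ for all $i,j,k$, the standard monomial order of level $\underline m$ is $\mathrm{Mat}_n(\mathcal O_D,\underline m)=\{(a_{ij})\in\mathrm{Mat}_n(D): a_{ij}\in\mathfrak P^{m_{ij}}\ \forall i,j\}$. $D^n$ denotes column vectors, a right $D$-vector space and left $\mathrm{Mat}_n(D)$-module. *)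

theory Defs
  imports Main
begin

text \<open>Powers of the maximal ideal of O_D, via the normalized valuation v on D
  (v is only meaningful on nonzero elements; 0 lies in every power).\<close>
definition Ppow :: "('d::division_ring \<Rightarrow> int) \<Rightarrow> int \<Rightarrow> 'd set" where
  "Ppow v l = {x. x = 0 \<or> l \<le> v x}"

abbreviation dcenter :: "'d::ring set" where
  "dcenter \<equiv> {c. \<forall>x. c * x = x * c}"

text \<open>D is a finite-dimensional (central) division algebra over its centre k, where k is a
  non-Archimedean local field (complete, non-trivially discretely valued, finite residue
  field), and v is the normalized discrete valuation of D (v surjective onto the integers).\<close>
definition nonarch_local_central_divalg :: "('d::division_ring \<Rightarrow> int) \<Rightarrow> bool" where
  "nonarch_local_central_divalg v \<longleftrightarrow>
     (\<forall>x y. x \<noteq> 0 \<longrightarrow> y \<noteq> 0 \<longrightarrow> v (x * y) = v x + v y)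
   \<and> (\<forall>x y. x \<noteq> 0 \<longrightarrow> y \<noteq> 0 \<longrightarrow> x + y \<noteq> 0 \<longrightarrow> min (v x) (v y) \<le> v (x + y))
   \<and> (\<forall>l. \<exists>x. x \<noteq> 0 \<and> v x = l)
   \<and> (\<exists>c\<in>dcenter. c \<noteq> 0 \<and> v c \<noteq> 0)
   \<and> (\<forall>X::nat \<Rightarrow> 'd. (\<forall>k. X k \<in> dcenter) \<and>
         (\<forall>N. \<exists>K. \<forall>a\<ge>K. \<forall>b\<ge>K. X a - X b \<in> Ppow v N) \<longrightarrow>
         (\<exists>L\<in>dcenter. \<forall>N. \<exists>K. \<forall>a\<ge>K. X a - L \<in> Ppow v N))
   \<and> (\<exists>S. finite S \<and> S \<subseteq> dcenter \<inter> Ppow v 0 \<and>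
         (\<forall>x\<in>dcenter \<inter> Ppow v 0. \<exists>s\<in>S. x - s \<in> Ppow v 1))
   \<and> (\<exists>B. finite B \<and> (\<forall>x::'d. \<exists>c. (\<forall>b\<in>B. c b \<in> dcenter) \<and> x = (\<Sum>b\<in>B. c b * b)))"

text \<open>n x n matrices are functions nat => nat => 'd, zero outside {0..<n}^2; column vectors
  in D^n are functions nat => 'd, zero outside {0..<n}. Index 0 plays the role of index 1.\<close>

definition smo :: "('d::division_ring \<Rightarrow> int) \<Rightarrow> nat \<Rightarrow> (nat \<Rightarrow> nat \<Rightarrow> int)
    \<Rightarrow> (nat \<Rightarrow> nat \<Rightarrow> 'd) set" where
  "smo v n m = {A. (\<forall>i<n. \<forall>j<n. A i j \<in> Ppow v (m i j)) \<and>
                   (\<forall>i j. \<not> (i < n \<and> j < n) \<longrightarrow> A i j = 0)}"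

definition col_lattice :: "('d::division_ring \<Rightarrow> int) \<Rightarrow> nat \<Rightarrow> (nat \<Rightarrow> int) \<Rightarrow> (nat \<Rightarrow> 'd) set" where
  "col_lattice v n l = {x. (\<forall>i<n. x i \<in> Ppow v (l i)) \<and> (\<forall>i\<ge>n. x i = 0)}"

definition mat_vec :: "nat \<Rightarrow> (nat \<Rightarrow> nat \<Rightarrow> 'd::ring) \<Rightarrow> (nat \<Rightarrow> 'd) \<Rightarrow> (nat \<Rightarrow> 'd)" where
  "mat_vec n A x = (\<lambda>i. if i < n then (\<Sum>j<n. A i j * x j) else 0)"

definition mat_mul :: "nat \<Rightarrow> (nat \<Rightarrow> nat \<Rightarrow> 'd::ring) \<Rightarrow> (nat \<Rightarrow> nat \<Rightarrow> 'd) \<Rightarrow> (nat \<Rightarrow> nat \<Rightarrow> 'd)" where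
  "mat_mul n A B = (\<lambda>i k. if i < n \<and> k < n then (\<Sum>j<n. A i j * B j k) else 0)"

definition vadd :: "(nat \<Rightarrow> 'd::ring) \<Rightarrow> (nat \<Rightarrow> 'd) \<Rightarrow> (nat \<Rightarrow> 'd)" where
  "vadd x y = (\<lambda>i. x i + y i)"

text \<open>Free left R-module R^(I) with basis indexed by I: finitely supported families.\<close>
definition free_mod :: "(nat \<Rightarrow> nat \<Rightarrow> 'd::ring) set \<Rightarrow> 'i set \<Rightarrow> ('i \<Rightarrow> nat \<Rightarrow> nat \<Rightarrow> 'd) set" where
  "free_mod R I = {f. (\<forall>i. f i \<in> R) \<and> (\<forall>i. i \<notin> I \<longrightarrow> f i = (\<lambda>a b. 0)) \<and>
                      finite {i. f i \<noteq> (\<lambda>a b. 0)}}"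

definition fadd :: "('i \<Rightarrow> nat \<Rightarrow> nat \<Rightarrow> 'd::ring) \<Rightarrow> ('i \<Rightarrow> nat \<Rightarrow> nat \<Rightarrow> 'd) \<Rightarrow> ('i \<Rightarrow> nat \<Rightarrow> nat \<Rightarrow> 'd)" where
  "fadd f g = (\<lambda>i a b. f i a b + g i a b)"

definition fsmul :: "nat \<Rightarrow> (nat \<Rightarrow> nat \<Rightarrow> 'd::ring) \<Rightarrow> ('i \<Rightarrow> nat \<Rightarrow> nat \<Rightarrow> 'd) \<Rightarrow> ('i \<Rightarrow> nat \<Rightarrow> nat \<Rightarrow> 'd)" where
  "fsmul n A f = (\<lambda>i. mat_mul n A (f i))"

text \<open>The basis index set I ranges over sets of elements of the type of M (enough, since the
  free module on M itself always surjects onto M).\<close>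
definition is_projective :: "nat \<Rightarrow> (nat \<Rightarrow> nat \<Rightarrow> 'd::ring) set \<Rightarrow> (nat \<Rightarrow> 'd) set \<Rightarrow> bool" where
  "is_projective n R M \<longleftrightarrow>
    (\<exists>(I::(nat \<Rightarrow> 'd) set) p s.
       (\<forall>f\<in>free_mod R I. p f \<in> M)
     \<and> (\<forall>f\<in>free_mod R I. \<forall>g\<in>free_mod R I. p (fadd f g) = vadd (p f) (p g))
     \<and> (\<forall>A\<in>R. \<forall>f\<in>free_mod R I. p (fsmul n A f) = mat_vec n A (p f))
     \<and> (\<forall>x\<in>M. s x \<in> free_mod R I)
     \<and> (\<forall>x\<in>M. \<forall>y\<in>M. s (vadd x y) = fadd (s x) (s y))
     \<and> (\<forall>A\<in>R. \<forall>x\<in>M. s (mat_vec n A x) = fsmul n A (s x))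
     \<and> (\<forall>x\<in>M. p (s x) = x))"

end

theory Submission
  imports Defs
begin

lemma ppow_mult:
  fixes v :: "'d::division_ring \<Rightarrow> int"
  assumes vm: "\<forall>x y. x \<noteq> 0 \<longrightarrow> y \<noteq> 0 \<longrightarrow> v (x * y) = v x + v y"
    and "x \<in> Ppow v a" "y \<in> Ppow v b"
  shows "(x::'d::division_ring) * y \<in> Ppow v (a + b)"
  using assms unfolding Ppow_def
  by (smt (verit) mem_Collect_eq mult_eq_0_iff)

lemma ppow_add:
  fixes v :: "'d::division_ring \<Rightarrow> int"
  assumes va: "\<forall>x y. x \<noteq> 0 \<longrightarrow> y \<noteq> 0 \<longrightarrow> x + y \<noteq> 0 \<longrightarrow> min (v x) (v y) \<le> v (x + y)"
    and "x \<in> Ppow v a" "y \<in> Ppow v a"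
  shows "(x::'d::division_ring) + y \<in> Ppow v a"
  using assms unfolding Ppow_def
  by (smt (verit, best) add_0 add_cancel_left_right mem_Collect_eq)

lemma ppow_sum:
  fixes v :: "'d::division_ring \<Rightarrow> int"
  assumes va: "\<forall>x y. x \<noteq> 0 \<longrightarrow> y \<noteq> 0 \<longrightarrow> x + y \<noteq> 0 \<longrightarrow> min (v x) (v y) \<le> v (x + y)"
  shows "finite B \<Longrightarrow> (\<forall>b\<in>B. f b \<in> Ppow v a) \<Longrightarrow> sum f B \<in> Ppow (v::'d::division_ring\<Rightarrow>int) a"
proof (induction B rule: finite_induct)
  case empty then show ?case by (simp add: Ppow_def)
next
  case (insert x F) then show ?case using ppow_add[OF va] by simp
qed

lemma v_one:
  fixes v :: "'d::division_ring \<Rightarrow> int"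
  assumes vm: "\<forall>x y. x \<noteq> 0 \<longrightarrow> y \<noteq> 0 \<longrightarrow> v (x * y) = v x + v y"
  shows "v (1::'d::division_ring) = 0"
proof -
  have "v (1 * 1) = v 1 + v (1::'d)" using vm[rule_format, of "1::'d" "1::'d"] by simp
  then show ?thesis by simp
qed

lemma v_inv:
  fixes v :: "'d::division_ring \<Rightarrow> int"
  assumes vm: "\<forall>x y. x \<noteq> 0 \<longrightarrow> y \<noteq> 0 \<longrightarrow> v (x * y) = v x + v y"
    and "(x::'d::division_ring) \<noteq> 0"
  shows "v (inverse x) = - v x"
proof -
  have "v (x * inverse x) = v x + v (inverse x)" using vm[rule_format, of x "inverse x"] assms(2) by simp
  moreover have "v (1::'d) = 0" by (rule v_one[of v]) (use vm in blast)
  ultimately show ?thesis using assms(2) by simp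
qed

lemma sum_delta_j:
  fixes j n :: nat
  assumes "j < n"
  shows "(\<Sum>q<n. B q * (if q = j then d else 0)) = B j * (d::'d::ring)"
proof -
  have "(\<Sum>q<n. B q * (if q = j then d else 0)) = (\<Sum>q<n. if q = j then B q * d else 0)"
    by (rule sum.cong) auto
  also have "\<dots> = B j * d" using assms by (subst sum.delta) simp_all
  finally show ?thesis .
qed

lemma reverse_dir:
  fixes v :: "'d::division_ring \<Rightarrow> int" and n j :: nat and m :: "nat\<Rightarrow>nat\<Rightarrow>int"
    and l :: "nat \<Rightarrow> int" and c :: int
  assumes vm: "\<forall>x y. x \<noteq> 0 \<longrightarrow> y \<noteq> 0 \<longrightarrow> v (x * y) = v x + v y"
    and surj: "\<forall>l. \<exists>x. x \<noteq> 0 \<and> v x = l"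
    and j: "j < n" and hl: "\<forall>i<n. l i = m i j + c"
  shows "is_projective n (smo v n m) (col_lattice v n l)"
proof -
  obtain d :: 'd where d: "d \<noteq> 0" "v d = c" using surj by blast
  define z :: "nat \<Rightarrow> 'd" where "z = (\<lambda>_. 0)"
  define e :: "nat \<Rightarrow> 'd" where "e = (\<lambda>q. if q = j then d else 0)"
  define p :: "((nat\<Rightarrow>'d) \<Rightarrow> nat \<Rightarrow> nat \<Rightarrow> 'd) \<Rightarrow> nat \<Rightarrow> 'd"
    where "p = (\<lambda>f. mat_vec n (f z) e)"
  define s :: "(nat\<Rightarrow>'d) \<Rightarrow> (nat\<Rightarrow>'d) \<Rightarrow> nat \<Rightarrow> nat \<Rightarrow> 'd" where
    "s = (\<lambda>x b. if b = z then (\<lambda>a b'. if a < n \<and> b' = j then x a * inverse d else 0) else (\<lambda>a b'. 0))"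
  let ?R = "smo v n m" and ?M = "col_lattice v n l"
  have pe: "p f i = (if i < n then f z i j * d else 0)" for f i
    unfolding p_def mat_vec_def e_def using sum_delta_j[OF j, of "f z i" d] by simp
  have vinvd: "v (inverse d) = - c" using v_inv[of v d] vm d by simp
  have P1: "p f \<in> ?M" if "f \<in> free_mod ?R {z}" for f
  proof -
    have fz: "f z \<in> ?R" using that by (simp add: free_mod_def)
    show ?thesis unfolding col_lattice_def pe
    proof (intro CollectI conjI allI impI)
      fix i assume i: "i < n"
      have "f z i j \<in> Ppow v (m i j)" using fz i j by (simp add: smo_def)
      moreover have "d \<in> Ppow v c" using d by (simp add: Ppow_def)
      ultimately have "f z i j * d \<in> Ppow v (m i j + c)" by (rule ppow_mult[OF vm])
      then show "(if i < n then f z i j * d else 0) \<in> Ppow v (l i)" using i hl by simp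
    qed simp
  qed
  have P2: "p (fadd f g) = vadd (p f) (p g)" for f g
    by (rule ext) (simp add: pe fadd_def vadd_def distrib_right)
  have P3: "p (fsmul n A f) = mat_vec n A (p f)" for A f
  proof (rule ext)
    fix i
    have "(\<Sum>r<n. A i r * p f r) = (\<Sum>r<n. A i r * (f z r j * d))"
      by (rule sum.cong) (simp_all add: pe)
    then show "p (fsmul n A f) i = mat_vec n A (p f) i"
      using j by (simp add: pe fsmul_def mat_mul_def mat_vec_def sum_distrib_right mult.assoc)
  qed
  have S1: "s x \<in> free_mod ?R {z}" if x: "x \<in> ?M" for x
  proof -
    have "s x z \<in> ?R" unfolding smo_def
    proof (intro CollectI conjI allI impI)
      fix a b' assume a: "a < n" and b': "b' < n"
      show "s x z a b' \<in> Ppow v (m a b')"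
      proof (cases "b' = j")
        case True
        have "x a \<in> Ppow v (l a)" using x a by (simp add: col_lattice_def)
        moreover have "inverse d \<in> Ppow v (- c)" using vinvd by (simp add: Ppow_def)
        ultimately have "x a * inverse d \<in> Ppow v (l a + - c)" by (rule ppow_mult[OF vm])
        then show ?thesis using True a hl by (simp add: s_def)
      next
        case False then show ?thesis by (simp add: s_def Ppow_def)
      qed
    next
      fix a b' assume "\<not> (a < n \<and> b' < n)"
      then show "s x z a b' = 0" using j by (auto simp: s_def)
    qed
    moreover have "{b. s x b \<noteq> (\<lambda>a b. 0)} \<subseteq> {z}" by (auto simp: s_def)
    ultimately show ?thesis unfolding free_mod_def
      by (auto simp: s_def smo_def Ppow_def intro: finite_subset)
  qed
  have S2: "s (vadd x y) = fadd (s x) (s y)" for x y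
    by (rule ext)+ (simp add: s_def fadd_def vadd_def distrib_right)
  have S3: "s (mat_vec n A x) = fsmul n A (s x)" for A x
  proof (rule ext)+
    fix b a b'
    show "s (mat_vec n A x) b a b' = fsmul n A (s x) b a b'"
    proof (cases "b = z")
      case True
      have "(\<Sum>q<n. A a q * (if q < n \<and> b' = j then x q * inverse d else 0))
          = (if b' = j then (\<Sum>q<n. A a q * x q) * inverse d else 0)"
        by (simp add: sum_distrib_right mult.assoc)
      then show ?thesis using True j
        by (simp add: s_def fsmul_def mat_mul_def mat_vec_def)
    next
      case False then show ?thesis by (simp add: s_def fsmul_def mat_mul_def)
    qed
  qed
  have S4: "p (s x) = x" if x: "x \<in> ?M" for x
  proof (rule ext)
    fix i
    show "p (s x) i = x i"
      using x d(1) by (simp add: pe s_def col_lattice_def mult.assoc)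
  qed
  show ?thesis unfolding is_projective_def
    apply (rule exI[of _ "{z}"], rule exI[of _ p], rule exI[of _ s])
    using P1 P2 P3 S1 S2 S3 S4 by blast
qed

lemma forward_dir:
  fixes v :: "'d::division_ring \<Rightarrow> int" and n :: nat and m :: "nat\<Rightarrow>nat\<Rightarrow>int"
    and l :: "nat \<Rightarrow> int"
  assumes vm: "\<forall>x y. x \<noteq> 0 \<longrightarrow> y \<noteq> 0 \<longrightarrow> v (x * y) = v x + v y"
    and va: "\<forall>x y. x \<noteq> 0 \<longrightarrow> y \<noteq> 0 \<longrightarrow> x + y \<noteq> 0 \<longrightarrow> min (v x) (v y) \<le> v (x + y)"
    and surj: "\<forall>l. \<exists>x. x \<noteq> 0 \<and> v x = l"
    and n: "1 \<le> n" and mdiag: "\<forall>i<n. m i i = 0"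
    and stab: "\<forall>A\<in>smo v n m. \<forall>x\<in>col_lattice v n l. mat_vec n A x \<in> col_lattice v n l"
    and proj: "is_projective n (smo v n m) (col_lattice v n l)"
  shows "\<exists>j<n. \<exists>c::int. \<forall>i<n. l i = m i j + c"
proof -
  let ?R = "smo v n m" and ?M = "col_lattice v n l"
  obtain I :: "(nat \<Rightarrow> 'd) set" and p s where
    p1: "\<forall>f\<in>free_mod ?R I. p f \<in> ?M"
    and p2: "\<forall>f\<in>free_mod ?R I. \<forall>g\<in>free_mod ?R I. p (fadd f g) = vadd (p f) (p g)"
    and p3: "\<forall>A\<in>?R. \<forall>f\<in>free_mod ?R I. p (fsmul n A f) = mat_vec n A (p f)"
    and s1: "\<forall>x\<in>?M. s x \<in> free_mod ?R I"
    and s3: "\<forall>A\<in>?R. \<forall>x\<in>?M. s (mat_vec n A x) = fsmul n A (s x)"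
    and s4: "\<forall>x\<in>?M. p (s x) = x"
    using proj unfolding is_projective_def by blast
  define zm :: "nat \<Rightarrow> nat \<Rightarrow> 'd" where "zm = (\<lambda>a b. 0)"
  define delta :: "(nat \<Rightarrow> 'd) \<Rightarrow> (nat \<Rightarrow> nat \<Rightarrow> 'd) \<Rightarrow> (nat \<Rightarrow> 'd) \<Rightarrow> nat \<Rightarrow> nat \<Rightarrow> 'd"
    where "delta b A = (\<lambda>b'. if b' = b then A else zm)" for b A
  define scal :: "'d \<Rightarrow> nat \<Rightarrow> nat \<Rightarrow> 'd" where "scal g = (\<lambda>r q. if r = q \<and> r < n then g else 0)" for g
  define vec :: "nat \<Rightarrow> 'd \<Rightarrow> nat \<Rightarrow> 'd" where "vec i t = (\<lambda>r. if r = i then t else 0)" for i t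
  define unit :: "nat \<Rightarrow> nat \<Rightarrow> 'd \<Rightarrow> nat \<Rightarrow> nat \<Rightarrow> 'd"
    where "unit i k a = (\<lambda>r q. if r = i \<and> q = k then a else 0)" for i k a
  define y where "y b = p (delta b (scal 1))" for b
  have n0: "0 < n" using n by simp
  have v1: "v 1 = 0" using v_one[of v] vm by blast
  have zm_R: "zm \<in> ?R" by (simp add: zm_def smo_def Ppow_def)
  have scal_R: "scal g \<in> ?R" if "g \<in> Ppow v 0" for g
    using that mdiag by (auto simp: scal_def smo_def Ppow_def)
  have Id_R: "scal 1 \<in> ?R" using scal_R v1 by (simp add: Ppow_def)
  have unit_R: "unit i k a \<in> ?R" if "i < n" "k < n" "a \<in> Ppow v (m i k)" for i k a
    using that by (auto simp: unit_def smo_def Ppow_def)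
  have vec_M: "vec i t \<in> ?M" if "i < n" "t \<in> Ppow v (l i)" for i t
    using that by (auto simp: vec_def col_lattice_def Ppow_def)
  have mm_scal: "mat_mul n (scal g) B a c = (if a < n \<and> c < n then g * B a c else 0)" for g B a c
  proof -
    have "(\<Sum>q<n. scal g a q * B q c) = (\<Sum>q<n. if q = a then (if a < n then g * B q c else 0) else 0)"
      by (rule sum.cong) (auto simp: scal_def)
    then show ?thesis by (simp add: mat_mul_def)
  qed
  have mm_unit: "mat_mul n (unit i k a) B i c = (if c < n then a * B k c else 0)"
    if "i < n" "k < n" for i k a B c
  proof -
    have "(\<Sum>q<n. unit i k a i q * B q c) = (\<Sum>q<n. if q = k then a * B q c else 0)"
      by (rule sum.cong) (auto simp: unit_def)
    then show ?thesis using that by (simp add: mat_mul_def)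
  qed
  have mv_unit: "mat_vec n (unit i k a) x = vec i (a * x k)" if "i < n" "k < n" for i k a x
  proof (rule ext)
    fix r
    have "(\<Sum>q<n. unit i k a r q * x q) = (\<Sum>q<n. if q = k then (if r = i then a * x q else 0) else 0)"
      by (rule sum.cong) (auto simp: unit_def)
    then show "mat_vec n (unit i k a) x r = vec i (a * x k) r"
      using that by (auto simp: mat_vec_def vec_def)
  qed
  have mv_scal: "mat_vec n (scal g) (vec i t) = vec i (g * t)" if "i < n" for g i t
  proof (rule ext)
    fix r
    have "(\<Sum>q<n. scal g r q * vec i t q) = (\<Sum>q<n. if q = r then (if r = i then g * t else 0) else 0)"
      by (rule sum.cong) (auto simp: scal_def vec_def)
    then show "mat_vec n (scal g) (vec i t) r = vec i (g * t) r"
      using that by (auto simp: mat_vec_def vec_def)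
  qed
  have mm_Id: "mat_mul n A (scal 1) = A" if "A \<in> ?R" for A
  proof (rule ext)+
    fix a c
    have "(\<Sum>q<n. A a q * scal 1 q c) = (\<Sum>q<n. if q = c then (if c < n then A a q else 0) else 0)"
      by (rule sum.cong) (auto simp: scal_def)
    then show "mat_mul n A (scal 1) a c = A a c"
      using that by (auto simp: mat_mul_def smo_def)
  qed
  have mm_zero: "mat_mul n A zm = zm" for A
    by (rule ext)+ (simp add: mat_mul_def zm_def)
  have free_delta: "delta b A \<in> free_mod ?R I" if "b \<in> I" "A \<in> ?R" for b A
  proof -
    have "{b'. delta b A b' \<noteq> (\<lambda>a b. 0)} \<subseteq> {b}" by (auto simp: delta_def zm_def)
    then show ?thesis using that zm_R unfolding free_mod_def
      by (auto simp: delta_def zm_def intro: finite_subset)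
  qed
  have free_zero: "(\<lambda>_. zm) \<in> free_mod ?R I" using zm_R by (simp add: free_mod_def zm_def)
  have p_delta: "p (delta b A) = mat_vec n A (y b)" if "b \<in> I" "A \<in> ?R" for b A
  proof -
    have "fsmul n A (delta b (scal 1)) = delta b A"
      by (rule ext) (simp add: fsmul_def delta_def mm_Id[OF that(2)] mm_zero)
    then show ?thesis using p3[rule_format, OF that(2) free_delta[OF that(1) Id_R]] unfolding y_def by simp
  qed
  have p_zero: "p (\<lambda>_. zm) = (\<lambda>_. 0)"
  proof -
    have fz: "fadd (\<lambda>_. zm) (\<lambda>_. zm) = (\<lambda>_. zm)" by (simp add: fadd_def zm_def)
    have "p (fadd (\<lambda>_. zm) (\<lambda>_. zm)) = vadd (p (\<lambda>_. zm)) (p (\<lambda>_. zm))"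
      by (rule p2[rule_format, OF free_zero free_zero])
    then have "p (\<lambda>_. zm) = vadd (p (\<lambda>_. zm)) (p (\<lambda>_. zm))" unfolding fz .
    then have "\<And>i. p (\<lambda>_. zm) i = p (\<lambda>_. zm) i + p (\<lambda>_. zm) i" unfolding vadd_def by metis
    then show ?thesis by (metis add_cancel_left_right)
  qed
  have p_sum: "\<And>f. f \<in> free_mod ?R I \<Longrightarrow> {b. f b \<noteq> zm} \<subseteq> B \<Longrightarrow>
      p f i = (\<Sum>b\<in>B. mat_vec n (f b) (y b) i)" if "finite B" for B i
    using that
  proof (induction B rule: finite_induct)
    case empty
    then have "f = (\<lambda>_. zm)" by auto
    then show ?case using p_zero by simp
  next
    case (insert b B f)
    define f' where "f' = f(b := zm)"
    have f'free: "f' \<in> free_mod ?R I"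
    proof -
      have A: "\<forall>b'. f' b' \<in> ?R" using insert.prems(1) zm_R by (simp add: free_mod_def f'_def)
      have B: "\<forall>b'. b' \<notin> I \<longrightarrow> f' b' = (\<lambda>a b. 0)"
        using insert.prems(1) by (simp add: free_mod_def f'_def zm_def)
      have "{b'. f' b' \<noteq> (\<lambda>a b. 0)} \<subseteq> {b'. f b' \<noteq> (\<lambda>a b. 0)}"
        by (auto simp: f'_def zm_def)
      moreover have "finite {b'. f b' \<noteq> (\<lambda>a b. 0)}" using insert.prems(1) by (simp add: free_mod_def)
      ultimately have "finite {b'. f' b' \<noteq> (\<lambda>a b. 0)}" by (rule finite_subset)
      then show ?thesis using A B by (simp add: free_mod_def)
    qed
    have sB: "{b. f' b \<noteq> zm} \<subseteq> B" using insert.prems(2) by (auto simp: f'_def)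
    have "p f' i = (\<Sum>b\<in>B. mat_vec n (f' b) (y b) i)"
      by (rule insert.IH[OF f'free sB])
    also have "\<dots> = (\<Sum>b\<in>B. mat_vec n (f b) (y b) i)"
      by (rule sum.cong) (use insert.hyps(2) in \<open>auto simp: f'_def\<close>)
    finally have IH: "p f' i = (\<Sum>b\<in>B. mat_vec n (f b) (y b) i)" .
    show ?case
    proof (cases "f b = zm")
      case True
      then have "f' = f" by (auto simp: f'_def)
      moreover have "mat_vec n (f b) (y b) i = 0" using True by (simp add: mat_vec_def zm_def)
      ultimately show ?thesis using IH insert.hyps by simp
    next
      case False
      then have bI: "b \<in> I" using insert.prems(1) by (auto simp: free_mod_def zm_def)
      have fbR: "f b \<in> ?R" using insert.prems(1) by (simp add: free_mod_def)
      have "f = fadd (delta b (f b)) f'"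
        by (rule ext)+ (simp add: fadd_def delta_def f'_def zm_def)
      then have "p f = vadd (p (delta b (f b))) (p f')"
        using p2[rule_format, OF free_delta[OF bI fbR] f'free] by simp
      then have "p f i = mat_vec n (f b) (y b) i + p f' i"
        using p_delta[OF bI fbR] by (simp add: vadd_def)
      then show ?thesis using IH insert.hyps by simp
    qed
  qed
  obtain d0 :: 'd where d0: "d0 \<noteq> 0" "v d0 = l 0" using surj by blast
  define u0 where "u0 = vec 0 d0"
  have u0M: "u0 \<in> ?M" unfolding u0_def using vec_M n0 d0 by (simp add: Ppow_def)
  define f0 where "f0 = s u0"
  have f0free: "f0 \<in> free_mod ?R I" using s1 u0M by (simp add: f0_def)
  define B0 where "B0 = {b. f0 b \<noteq> zm}"
  have finB0: "finite B0" using f0free by (simp add: free_mod_def B0_def zm_def)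
  have "d0 = p f0 0" using s4 u0M by (simp add: f0_def u0_def vec_def)
  also have "\<dots> = (\<Sum>b\<in>B0. mat_vec n (f0 b) (y b) 0)"
    using p_sum[OF finB0 f0free] by (simp add: B0_def)
  also have "\<dots> = (\<Sum>b\<in>B0. \<Sum>q<n. f0 b 0 q * y b q)"
    using n0 by (simp add: mat_vec_def)
  finally have d0sum: "d0 = (\<Sum>b\<in>B0. \<Sum>q<n. f0 b 0 q * y b q)" .
  obtain b q where bB0: "b \<in> B0" and q: "q < n" and nP: "f0 b 0 q * y b q \<notin> Ppow v (l 0 + 1)"
  proof (rule ccontr)
    assume "\<not> thesis"
    then have "\<forall>b\<in>B0. \<forall>q\<in>{..<n}. f0 b 0 q * y b q \<in> Ppow v (l 0 + 1)" using that by blast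
    then have "d0 \<in> Ppow v (l 0 + 1)" unfolding d0sum
      using ppow_sum[of v, OF va] finB0 by (simp add: ppow_sum[of v, OF va])
    then show False using d0 by (simp add: Ppow_def)
  qed
  have bI: "b \<in> I" using bB0 f0free by (auto simp: B0_def free_mod_def zm_def)
  have ybM: "y b \<in> ?M" unfolding y_def using p1 free_delta[OF bI Id_R] by blast
  define \<alpha> where "\<alpha> = f0 b 0 q"
  have \<alpha>0: "\<alpha> \<noteq> 0" and yb0: "y b q \<noteq> 0" using nP by (auto simp: Ppow_def \<alpha>_def)
  have "v (\<alpha> * y b q) < l 0 + 1" using nP \<alpha>0 yb0 by (auto simp: Ppow_def \<alpha>_def)
  moreover have "v (\<alpha> * y b q) = v \<alpha> + v (y b q)" using vm \<alpha>0 yb0 by blast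
  moreover have "l q \<le> v (y b q)" using ybM q yb0 by (auto simp: col_lattice_def Ppow_def)
  ultimately have v\<alpha>: "v \<alpha> \<le> l 0 - l q" by linarith
  have "\<forall>i<n. l i = m i q + l q"
  proof (intro allI impI)
    fix i assume i: "i < n"
    obtain a where a: "a \<noteq> 0" "v a = m i q" using surj by blast
    obtain t where t: "t \<noteq> 0" "v t = l q" using surj by blast
    have "mat_vec n (unit i q a) (vec q t) \<in> ?M"
      using stab unit_R[OF i q] vec_M[OF q] a t by (simp add: Ppow_def)
    then have "mat_vec n (unit i q a) (vec q t) i \<in> Ppow v (l i)" using i by (simp add: col_lattice_def)
    then have "a * t \<in> Ppow v (l i)" by (simp add: mv_unit[OF i q] vec_def)
    moreover have "a * t \<noteq> 0" using a t by simp
    moreover have "v (a * t) = m i q + l q" using vm a t by simp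
    ultimately have le1: "l i \<le> m i q + l q" by (simp add: Ppow_def)
    obtain g where g: "g \<noteq> 0" "v g = max 0 (m i 0 - l i + l 0)" using surj by blast
    obtain t where t: "t \<noteq> 0" "v t = l i" using surj by blast
    define a where "a = g * t * inverse d0"
    have a0: "a \<noteq> 0" using g t d0 by (simp add: a_def)
    have va': "v a = v g + l i - l 0" using vm g t d0 v_inv[of v d0] unfolding a_def by simp
    have "m i 0 \<le> v a" using va' g by (auto simp: max_def)
    then have aP: "a \<in> Ppow v (m i 0)" by (simp add: Ppow_def)
    have gP: "g \<in> Ppow v 0" using g by (simp add: Ppow_def)
    have ad0: "a * d0 = g * t" using d0 by (simp add: a_def mult.assoc)
    have xiM: "vec i t \<in> ?M" using vec_M[OF i] t by (simp add: Ppow_def)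
    have "mat_vec n (unit i 0 a) u0 = mat_vec n (scal g) (vec i t)"
    proof -
      have "mat_vec n (unit i 0 a) u0 = vec i (a * u0 0)" by (rule mv_unit[OF i n0])
      also have "\<dots> = vec i (g * t)" using ad0 by (simp add: u0_def vec_def)
      also have "\<dots> = mat_vec n (scal g) (vec i t)" by (rule mv_scal[OF i, symmetric])
      finally show ?thesis .
    qed
    then have "fsmul n (unit i 0 a) f0 = fsmul n (scal g) (s (vec i t))"
      using s3[rule_format, OF unit_R[OF i n0 aP] u0M] s3[rule_format, OF scal_R[OF gP] xiM] unfolding f0_def by simp
    then have "mat_mul n (unit i 0 a) (f0 b) i q = mat_mul n (scal g) (s (vec i t) b) i q"
      unfolding fsmul_def by metis
    then have eq: "a * \<alpha> = g * s (vec i t) b i q"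
      using mm_unit[OF i n0] mm_scal i q by (simp add: \<alpha>_def)
    define \<beta> where "\<beta> = s (vec i t) b i q"
    have "\<beta> = inverse g * (a * \<alpha>)" using eq g by (simp add: \<beta>_def mult.assoc[symmetric])
    also have "\<dots> = t * inverse d0 * \<alpha>" using g by (simp add: a_def mult.assoc[symmetric])
    finally have \<beta>: "\<beta> = t * inverse d0 * \<alpha>" .
    have \<beta>0: "\<beta> \<noteq> 0" using \<beta> t d0 \<alpha>0 by simp
    have v\<beta>: "v \<beta> = l i - l 0 + v \<alpha>" using \<beta> vm t d0 \<alpha>0 v_inv[of v d0] by simp
    have "s (vec i t) b \<in> ?R" using s1 xiM by (simp add: free_mod_def)
    then have "\<beta> \<in> Ppow v (m i q)" using i q by (simp add: smo_def \<beta>_def)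
    then have "m i q \<le> v \<beta>" using \<beta>0 by (simp add: Ppow_def)
    then show "l i = m i q + l q" using le1 v\<beta> v\<alpha> by linarith
  qed
  then show ?thesis using q by blast
qed

theorem theorem3p1:
  fixes v :: "'d::division_ring \<Rightarrow> int" and n :: nat
    and m :: "nat \<Rightarrow> nat \<Rightarrow> int" and l :: "nat \<Rightarrow> int"
  assumes "nonarch_local_central_divalg v"
    and "1 \<le> n"
    and "\<forall>i<n. m i i = 0"
    and "\<forall>i<n. \<forall>j<n. \<forall>k<n. m i k \<le> m i j + m j k"
    and "\<forall>i<n. m 0 i = 0"
    and "\<forall>A\<in>smo v n m. \<forall>x\<in>col_lattice v n l. mat_vec n A x \<in> col_lattice v n l"
  shows "is_projective n (smo v n m) (col_lattice v n l) \<longleftrightarrow>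
         (\<exists>j<n. \<exists>c::int. \<forall>i<n. l i = m i j + c)"
proof -
  have vm: "\<forall>x y. x \<noteq> 0 \<longrightarrow> y \<noteq> 0 \<longrightarrow> v (x * y) = v x + v y"
    and va: "\<forall>x y. x \<noteq> 0 \<longrightarrow> y \<noteq> 0 \<longrightarrow> x + y \<noteq> 0 \<longrightarrow> min (v x) (v y) \<le> v (x + y)"
    and surj: "\<forall>l. \<exists>x. x \<noteq> 0 \<and> v x = l"
    using assms(1) unfolding nonarch_local_central_divalg_def by blast+
  show ?thesis
  proof
    assume "is_projective n (smo v n m) (col_lattice v n l)"
    then show "\<exists>j<n. \<exists>c::int. \<forall>i<n. l i = m i j + c"
      using forward_dir[OF vm va surj assms(2) assms(3) assms(6)] by blast
  next
    assume "\<exists>j<n. \<exists>c::int. \<forall>i<n. l i = m i j + c"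
    then obtain j c where "j < n" "\<forall>i<n. l i = m i j + c" by blast
    then show "is_projective n (smo v n m) (col_lattice v n l)"
      using reverse_dir[OF vm surj] by blast
  qed
qed

end
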